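(* Let $V$ be a real vector space of odd finite dimension, $G\le\mathrm{GL}(V)$ a finite group such that $V$ is a non-trivial irreducible $\mathbb{R}G$-module and $-\mathrm{id}_V\notin G$, and let $n\in N_{\mathrm{GL}(V)}(G)$ have finite order, with $\nu=\mathrm{ad}_n$. Suppose there is $g\in G$ such that $\alpha:=\mathrm{ad}_g\circ\nu\in\mathrm{Aut}(G)$ has even order and $$\dim(V)>(|\alpha|-1)\,|C_G(\alpha')|^{1/2}$$ for every $\alpha'\in\langle\alpha\rangle$ of prime order. Then the triple $(G,V,n)$ has the $E1$-property, i.e. there is $h\in G$ such that $hn$ has eigenvalue $1$.
   Context: For $x\in N_{\mathrm{GL}(V)}(G)$, $\mathrm{ad}_x\in\mathrm{Aut}(G)$ denotes conjugation $y\mapsto xyx^{-1}$. For $\beta\in\mathrm{Aut}(G)$, $C_G(\beta)=\{y\in G\mid\beta(y)=y\}$, and $|\alpha|$ denotes the order of $\alpha$. *)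

theory Defs
  imports "HOL-Analysis.Analysis"
begin

text \<open>V = real^'n, GL(V) = invertible matrices real^'n^'n acting by *v.\<close>

primrec mpow :: "real^'n^'n \<Rightarrow> nat \<Rightarrow> real^'n^'n" where
  "mpow A 0 = mat 1"
| "mpow A (Suc k) = A ** mpow A k"

definition finite_matrix_group :: "(real^'n^'n) set \<Rightarrow> bool" where
  "finite_matrix_group G \<longleftrightarrow> finite G \<and> mat 1 \<in> G \<and>
     (\<forall>x\<in>G. \<forall>y\<in>G. x ** y \<in> G) \<and>
     (\<forall>x\<in>G. invertible x \<and> matrix_inv x \<in> G)"

definition irreducible_module :: "(real^'n^'n) set \<Rightarrow> bool" where
  "irreducible_module G \<longleftrightarrow>
     (\<forall>W :: (real^'n) set. subspace W \<and> (\<forall>h\<in>G. \<forall>w\<in>W. h *v w \<in> W)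
        \<longrightarrow> W = {0} \<or> W = UNIV)"

definition nontrivial_module :: "(real^'n^'n) set \<Rightarrow> bool" where
  "nontrivial_module G \<longleftrightarrow> (\<exists>h\<in>G. \<exists>v. h *v v \<noteq> v)"

definition ad :: "real^'n^'n \<Rightarrow> real^'n^'n \<Rightarrow> real^'n^'n" where
  "ad x y = x ** y ** matrix_inv x"

definition in_normalizer :: "real^'n^'n \<Rightarrow> (real^'n^'n) set \<Rightarrow> bool" where
  "in_normalizer x G \<longleftrightarrow> invertible x \<and> ad x ` G = G"

definition aut_order :: "(real^'n^'n) set \<Rightarrow> (real^'n^'n \<Rightarrow> real^'n^'n) \<Rightarrow> nat" where
  "aut_order G f = (LEAST k. k > 0 \<and> (\<forall>y\<in>G. (f ^^ k) y = y))"

definition centralizer_aut :: "(real^'n^'n) set \<Rightarrow> (real^'n^'n \<Rightarrow> real^'n^'n) \<Rightarrow> (real^'n^'n) set" where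
  "centralizer_aut G f = {y\<in>G. f y = y}"

definition E1_property :: "(real^'n^'n) set \<Rightarrow> real^'n^'n \<Rightarrow> bool" where
  "E1_property G n \<longleftrightarrow> (\<exists>h\<in>G. \<exists>v. v \<noteq> 0 \<and> (h ** n) *v v = v)"

end

theory Submission
  imports Defs "HOL-Computational_Algebra.Primes"
begin


lemma scaleR_mat1: "c *\<^sub>R (mat 1 :: real^'n^'n) = mat c"
  by (simp add: vec_eq_iff mat_def)

lemma det_scaleR_mat1: "det (c *\<^sub>R mat 1 :: real^'n^'n) = c ^ CARD('n)"
  by (simp add: scaleR_mat1 det_diagonal mat_def)

lemma scaleR_mat1_mult: "(c *\<^sub>R mat 1) ** (X::real^'n^'n) = c *\<^sub>R X"
  by (metis scalar_matrix_assoc matrix_mul_lid)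

lemma isCont_det_affine:
  fixes A B :: "real^'n^'n"
  shows "isCont (\<lambda>t::real. det (A + t *\<^sub>R B)) t0"
proof -
  have "(\<lambda>t. det (A + t *\<^sub>R B)) = (\<lambda>t. \<Sum>p\<in>{p. p permutes (UNIV::'n set)}. of_int (sign p) * (\<Prod>i\<in>UNIV. A$i$p i + t * B$i$p i))"
    by (simp add: det_def)
  then show ?thesis by (auto intro!: continuous_intros)
qed

lemma odd_real_eigen:
  fixes M :: "real^'n^'n"
  assumes odd: "odd CARD('n)"
  shows "\<exists>c. det (M - c *\<^sub>R mat 1) = 0"
proof -
  define h where "h s = det (- mat 1 + s *\<^sub>R M)" for s :: real
  have "- mat 1 = ((-1) *\<^sub>R mat 1 :: real^'n^'n)" by simp
  then have h0: "h 0 = -1" unfolding h_def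
    using det_scaleR_mat1[of "-1", where 'n='n] odd by simp
  have "isCont h 0" unfolding h_def by (rule isCont_det_affine)
  then have hl: "(h \<longlongrightarrow> h 0) (at 0)" by (simp add: isCont_def)
  have "eventually (\<lambda>s. h s < 0) (at 0)" using order_tendstoD(2)[OF hl, of 0] h0 by simp
  then obtain d where d: "d > 0" "\<And>s. s \<noteq> 0 \<Longrightarrow> dist s 0 < d \<Longrightarrow> h s < 0"
    unfolding eventually_at by blast
  define s where "s = d/2"
  define T where "T = 2/d"
  have sT: "T * s = 1" "T > 0" "s > 0" using d by (auto simp: s_def T_def)
  have hs: "h s < 0" "h (-s) < 0" using d by (auto intro!: d(2) simp: s_def dist_real_def)
  have e1: "M - T *\<^sub>R mat 1 = (T *\<^sub>R mat 1) ** (- mat 1 + s *\<^sub>R M)"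
    using sT by (simp add: scaleR_mat1_mult algebra_simps)
  have e2: "M - (-T) *\<^sub>R mat 1 = ((-T) *\<^sub>R mat 1) ** (- mat 1 + (-s) *\<^sub>R M)"
    unfolding scaleR_mat1_mult using sT by (simp add: algebra_simps)
  have g1: "det (M - T *\<^sub>R mat 1) < 0"
    unfolding e1 det_mul det_scaleR_mat1 using hs sT by (simp add: h_def mult_pos_neg)
  have g2: "det (M - (-T) *\<^sub>R mat 1) > 0"
    unfolding e2 det_mul det_scaleR_mat1 using hs sT odd
    by (simp add: h_def power_minus_odd mult_pos_neg)
  have eqf: "M - t *\<^sub>R mat 1 = M + t *\<^sub>R (- mat 1)" for t :: real
    by (simp add: algebra_simps)
  have cont: "\<forall>x. -T \<le> x \<and> x \<le> T \<longrightarrow> isCont (\<lambda>t. det (M + t *\<^sub>R (- mat 1))) x"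
    by (intro allI impI isCont_det_affine)
  have "\<exists>x\<ge>-T. x \<le> T \<and> det (M + x *\<^sub>R (- mat 1)) = 0"
    by (rule IVT2[OF _ _ _ cont]) (use g1 g2 sT in \<open>unfold eqf, auto intro: less_imp_le\<close>)
  then show ?thesis by (metis eqf)
qed


lemma schur:
  fixes G :: "(real^'n^'n) set" and M :: "real^'n^'n"
  assumes odd: "odd CARD('n)" and irr: "irreducible_module G"
    and comm: "\<And>h. h \<in> G \<Longrightarrow> h ** M = M ** h"
  shows "M = (trace M / real CARD('n)) *\<^sub>R mat 1"
proof -
  obtain c where c: "det (M - c *\<^sub>R mat 1) = 0" using odd_real_eigen[OF odd] by blast
  then have "\<not> invertible (M - c *\<^sub>R mat 1)" by (simp add: invertible_det_nz)
  then obtain v where v: "v \<noteq> 0" "(M - c *\<^sub>R mat 1) *v v = 0"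
    unfolding invertible_left_inverse matrix_left_invertible_ker by blast
  have mvd: "(M - c *\<^sub>R mat 1) *v w = M *v w - c *\<^sub>R w" for w
    by (simp add: matrix_vector_mult_diff_rdistrib scaleR_matrix_vector_assoc[symmetric])
  define W where "W = {w. M *v w = c *\<^sub>R w}"
  have sub: "subspace W" unfolding W_def subspace_def
    by (auto simp: algebra_simps)
  have inv: "\<forall>h\<in>G. \<forall>w\<in>W. h *v w \<in> W"
    unfolding W_def using comm
    by (auto simp: matrix_vector_mul_assoc algebra_simps) (metis matrix_vector_mul_assoc matrix_vector_mult_scaleR)
  have "v \<in> W" using v mvd unfolding W_def by simp
  then have "W = UNIV" using irr sub inv v(1) unfolding irreducible_module_def by blast
  then have Mc: "M = c *\<^sub>R mat 1"
    unfolding matrix_eq W_def by (auto simp: scaleR_matrix_vector_assoc[symmetric])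
  then have "trace M = c * real CARD('n)" by (simp add: trace_def mat_def)
  then show ?thesis using Mc by simp
qed


abbreviation iv :: "real^'n^'n \<Rightarrow> real^'n^'n" where "iv A \<equiv> matrix_inv A"

lemma iv_rl:
  fixes A :: "real^'n^'n"
  assumes "invertible A"
  shows "A ** iv A = mat 1" "iv A ** A = mat 1"
proof -
  have "\<exists>A'. A ** A' = mat 1 \<and> A' ** A = mat 1" using assms unfolding invertible_def by blast
  from someI_ex[OF this] show "A ** iv A = mat 1" "iv A ** A = mat 1"
    unfolding matrix_inv_def by auto
qed

lemma iv_unique:
  fixes A B :: "real^'n^'n"
  assumes "A ** B = mat 1"
  shows "iv A = B"
proof -
  have inv: "invertible A" using assms invertible_right_inverse by blast
  have "iv A = iv A ** (A ** B)" using assms by simp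
  also have "\<dots> = B" by (simp add: matrix_mul_assoc iv_rl[OF inv])
  finally show ?thesis .
qed

lemma iv_simps:
  fixes A X :: "real^'n^'n"
  assumes "invertible A"
  shows "A ** iv A = mat 1" "iv A ** A = mat 1"
    "X ** A ** iv A = X" "X ** iv A ** A = X"
  using iv_rl[OF assms] by (simp_all add: matrix_mul_assoc[symmetric])

lemma invertible_iv: "invertible (A::real^'n^'n) \<Longrightarrow> invertible (iv A)"
  using iv_rl unfolding invertible_def by blast

lemma iv_iv: "invertible (A::real^'n^'n) \<Longrightarrow> iv (iv A) = A"
  using iv_rl iv_unique by blast

lemma invertible_mul: "invertible (A::real^'n^'n) \<Longrightarrow> invertible B \<Longrightarrow> invertible (A ** B)"
  by (rule invertible_mult)

lemma iv_mul:
  fixes A B :: "real^'n^'n"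
  assumes "invertible A" "invertible B"
  shows "iv (A ** B) = iv B ** iv A"
  by (rule iv_unique) (simp add: matrix_mul_assoc iv_simps assms)

lemma iv_one: "iv (mat 1 :: real^'n^'n) = mat 1"
  by (rule iv_unique) simp

lemma invertible_one: "invertible (mat 1 :: real^'n^'n)"
  unfolding invertible_def by (intro exI[of _ "mat 1"]) simp

lemma ad_mul:
  fixes A B :: "real^'n^'n"
  assumes "invertible A" "invertible B"
  shows "ad (A ** B) = ad A \<circ> ad B"
  by (rule ext) (simp add: ad_def iv_mul assms matrix_mul_assoc)

lemma ad_one: "ad (mat 1 :: real^'n^'n) = id"
  by (rule ext) (simp add: ad_def iv_one)

lemma mpow_add: "mpow A (a + b) = mpow A a ** mpow A b"
  by (induction a) (simp_all add: matrix_mul_assoc)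

lemma mpow_comm: "mpow A k ** A = A ** mpow A k"
  by (induction k) (simp_all add: matrix_mul_assoc[symmetric])

lemma matrix_add_rdistrib': "((A::real^'n^'n) + B) ** C = A ** C + B ** C"
  by (vector matrix_matrix_mult_def sum.distrib[symmetric] field_simps)

lemma mpow_mult: "mpow A (a * b) = mpow (mpow A a) b"
  by (induction b) (simp_all add: mpow_add mult.commute[of a] matrix_mul_assoc
      flip: mult_Suc_right mpow_comm)

lemma mpow_invertible: "invertible A \<Longrightarrow> invertible (mpow A k)"
  by (induction k) (simp_all add: invertible_one invertible_mul)

lemma ad_mpow: "invertible A \<Longrightarrow> ad A ^^ k = ad (mpow A k)"
  by (induction k) (simp_all add: ad_one ad_mul mpow_invertible)

lemma det_mpow: "det (mpow A k) = det A ^ k"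
  by (induction k) (simp_all add: det_mul)

lemma mpow_scalar: "mpow (c *\<^sub>R mat 1 :: real^'n^'n) k = (c ^ k) *\<^sub>R mat 1"
  by (induction k) (simp_all add: scaleR_mat1_mult)

lemma trace_ad: "invertible A \<Longrightarrow> trace (ad A B) = trace (B::real^'n^'n)"
  unfolding ad_def by (metis trace_mul_sym matrix_mul_assoc iv_simps(2) matrix_mul_lid)

lemma trace_transpose: "trace (transpose (A::real^'n^'n)) = trace A"
  by (simp add: trace_def transpose_def)

lemma sum_mmul_right: "finite S \<Longrightarrow> (\<Sum>i\<in>S. (f i::real^'n^'n)) ** (B::real^'n^'n) = (\<Sum>i\<in>S. f i ** B)"
  by (induction S rule: finite_induct) (simp_all add: matrix_add_rdistrib')

lemma sum_mmul_left: "finite S \<Longrightarrow> (B::real^'n^'n) ** (\<Sum>i\<in>S. f i) = (\<Sum>i\<in>S. B ** f i)"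
  by (induction S rule: finite_induct) (simp_all add: matrix_add_ldistrib)

lemma trace_sum: "finite S \<Longrightarrow> trace (\<Sum>i\<in>S. f i) = (\<Sum>i\<in>S. trace (f i :: real^'n^'n))"
  by (induction S rule: finite_induct) (simp_all add: trace_add trace_0[simplified])



lemma sum_mvec: "finite S \<Longrightarrow> (\<Sum>i\<in>S. (f i::real^'n^'n)) *v v = (\<Sum>i\<in>S. f i *v v)"
  by (induction S rule: finite_induct) (simp_all add: matrix_vector_mult_add_rdistrib)

lemma invertible_of_mpow:
  assumes "N > 0" "mpow z N = (mat 1::real^'n^'n)"
  shows "invertible z"
proof -
  obtain N' where "N = Suc N'" using assms by (cases N) auto
  then have "z ** mpow z N' = mat 1" using assms by simp
  then show ?thesis using invertible_right_inverse by blast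
qed

lemma trace_iv_finite_order:
  fixes z :: "real^'n^'n"
  assumes N: "N > 0" "mpow z N = mat 1"
  shows "trace (iv z) = trace z"
proof -
  have invz: "invertible z" by (rule invertible_of_mpow[OF N])
  define F where "F k = transpose (mpow z k) ** mpow z k" for k
  define S where "S = (\<Sum>k<N. F k)"
  have FS: "transpose z ** F k ** z = F (Suc k)" for k
  proof -
    have e: "mpow z (Suc k) = mpow z k ** z" by (simp add: mpow_comm)
    show ?thesis unfolding F_def e by (simp add: matrix_transpose_mul matrix_mul_assoc)
  qed
  have "transpose z ** S ** z = (\<Sum>k<N. F (Suc k))"
    unfolding S_def by (simp add: sum_mmul_left sum_mmul_right FS[symmetric] matrix_mul_assoc)
  also have "\<dots> = S"
  proof -
    obtain N' where N': "N = Suc N'" using N by (cases N) auto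
    have "F N = F 0" using N by (simp add: F_def)
    moreover have "(\<Sum>k<Suc N'. F (Suc k)) = (\<Sum>k<N'. F (Suc k)) + F (Suc N')"
      by (rule sum.lessThan_Suc)
    moreover have "(\<Sum>k<Suc N'. F k) = F 0 + (\<Sum>k<N'. F (Suc k))"
      by (rule sum.lessThan_Suc_shift)
    ultimately show ?thesis unfolding S_def N' by (simp add: add.commute)
  qed
  finally have zS: "transpose z ** S ** z = S" .
  have Sinj: "v = 0" if "S *v v = 0" for v
  proof -
    have g: "inner v (F k *v v) = inner (mpow z k *v v) (mpow z k *v v)" for k
      by (simp add: F_def matrix_vector_mul_assoc[symmetric] dot_lmul_matrix[symmetric] inner_commute)
    have "inner v (S *v v) = (\<Sum>k<N. inner (mpow z k *v v) (mpow z k *v v))"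
      unfolding S_def by (simp add: sum_mvec inner_sum_right g)
    also have "\<dots> \<ge> inner (mpow z 0 *v v) (mpow z 0 *v v)"
      by (rule member_le_sum) (use N in auto)
    finally have "inner v v \<le> 0" using that by simp
    then show ?thesis by (metis inner_eq_zero_iff inner_ge_zero order_antisym)
  qed
  then have invS: "invertible S"
    unfolding invertible_left_inverse matrix_left_invertible_ker by blast
  have "transpose z ** S = S ** iv z"
    using arg_cong[OF zS, of "\<lambda>X. X ** iv z"] by (simp add: iv_simps invz)
  then have "iv S ** (transpose z ** S) = iv z"
    by (simp add: matrix_mul_assoc iv_simps invS)
  then have "trace (iv z) = trace ((iv S ** transpose z) ** S)" by (simp add: matrix_mul_assoc)
  also have "\<dots> = trace (S ** iv S ** transpose z)"
    by (simp add: trace_mul_sym[of "iv S ** transpose z"] matrix_mul_assoc)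
  also have "\<dots> = trace z" by (simp add: iv_simps invS trace_transpose)
  finally show ?thesis .
qed


definition Emat :: "'n::finite \<Rightarrow> 'n \<Rightarrow> real^'n^'n" where
  "Emat a b = (\<chi> i j. if i = a \<and> j = b then 1 else 0)"

lemma Emat_col: "(A ** Emat a b) $ i $ j = (if j = b then A $ i $ a else (0::real))"
  by (cases "j = b") (simp_all add: Emat_def matrix_matrix_mult_def if_distrib if_distribR cong: if_cong)

lemma Emat_entry: "(A ** Emat a b ** B) $ a $ b = A $ a $ a * B $ b $ (b::'n::finite)"
proof -
  have "(A ** Emat a b ** B) $ a $ b = (\<Sum>j\<in>UNIV. (if j = b then A $ a $ a else 0) * B $ j $ b)"
    by (simp add: matrix_matrix_mult_def[of "A ** Emat a b"] Emat_col)
  also have "\<dots> = A $ a $ a * B $ b $ b"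
    by (simp add: if_distrib if_distribR cong: if_cong)
  finally show ?thesis .
qed

lemma trace_Emat: "trace (Emat a b) = (if a = b then 1 else 0)"
proof (cases "a = b")
  case False
  then have "\<And>i. (if i = a \<and> i = b then 1 else (0::real)) = 0" by auto
  then show ?thesis using False by (simp add: Emat_def trace_def)
qed (simp add: Emat_def trace_def)

lemma trace_prod_Emat: "trace A * trace B = (\<Sum>a\<in>UNIV. \<Sum>b\<in>UNIV. (A ** Emat a b ** B) $ a $ b)"
  by (simp add: Emat_entry trace_def sum_product)

lemma fmg:
  assumes "finite_matrix_group G"
  shows "finite G" "mat 1 \<in> G" "\<And>x y. x \<in> G \<Longrightarrow> y \<in> G \<Longrightarrow> x ** y \<in> G"
    "\<And>x. x \<in> G \<Longrightarrow> invertible x" "\<And>x. x \<in> G \<Longrightarrow> iv x \<in> G"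
  using assms unfolding finite_matrix_group_def by auto

lemma avg:
  fixes G :: "(real^'n^'n) set"
  assumes odd: "odd CARD('n)" and G: "finite_matrix_group G" and irr: "irreducible_module G"
  shows "(\<Sum>h\<in>G. ad h M) = (real (card G) * trace M / real CARD('n)) *\<^sub>R mat 1"
proof -
  note g = fmg[OF G]
  define P where "P = (\<Sum>h\<in>G. ad h M)"
  have comm: "k ** P = P ** k" if k: "k \<in> G" for k
  proof -
    have "k ** P = (\<Sum>h\<in>G. ad (k ** h) M ** k)"
      unfolding P_def using k
      by (auto simp: sum_mmul_left ad_def iv_mul g matrix_mul_assoc iv_simps intro!: sum.cong)
    also have "\<dots> = (\<Sum>h\<in>G. ad (k ** h) M) ** k" by (simp add: sum_mmul_right g)
    also have "(\<Sum>h\<in>G. ad (k ** h) M) = P"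
    proof -
      have inj: "inj_on ((**) k) G"
      proof
        fix a b assume "a \<in> G" "b \<in> G" "k ** a = k ** b"
        then have "iv k ** (k ** a) = iv k ** (k ** b)" by simp
        then show "a = b" using k g by (simp add: matrix_mul_assoc iv_simps)
      qed
      have img: "(**) k ` G = G"
      proof
        show "(**) k ` G \<subseteq> G" using k g by auto
        show "G \<subseteq> (**) k ` G"
        proof
          fix h assume h: "h \<in> G"
          have "h = k ** (iv k ** h)" using k g by (simp add: matrix_mul_assoc iv_simps)
          then show "h \<in> (**) k ` G" using h k g by blast
        qed
      qed
      show ?thesis unfolding P_def
        using sum.reindex[OF inj, of "\<lambda>h. ad h M"] img by simp
    qed
    finally show ?thesis .
  qed
  have "P = (trace P / real CARD('n)) *\<^sub>R mat 1"
    by (rule schur[OF odd irr]) (use comm in auto)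
  moreover have "trace P = real (card G) * trace M"
    unfolding P_def using g by (simp add: trace_sum trace_ad)
  ultimately show ?thesis unfolding P_def by simp
qed

lemma key_sum:
  fixes G :: "(real^'n^'n) set"
  assumes odd: "odd CARD('n)" and G: "finite_matrix_group G" and irr: "irreducible_module G"
    and y: "invertible y"
  shows "(\<Sum>h\<in>G. trace (h ** y) * trace (iv (h ** y))) = real (card G)"
proof -
  note g = fmg[OF G]
  have "(\<Sum>h\<in>G. trace (h ** y) * trace (iv (h ** y)))
      = (\<Sum>h\<in>G. \<Sum>a\<in>UNIV. \<Sum>b\<in>UNIV. (ad h (ad y (Emat a b))) $ a $ b)"
    unfolding trace_prod_Emat using g y
    by (intro sum.cong refl) (simp add: ad_def iv_mul matrix_mul_assoc)
  also have "\<dots> = (\<Sum>a\<in>UNIV. \<Sum>b\<in>UNIV. (\<Sum>h\<in>G. ad h (ad y (Emat a b))) $ a $ b)"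
    by (simp add: sum_component sum.swap[of _ G])
  also have "\<dots> = (\<Sum>a\<in>(UNIV::'n set). \<Sum>b\<in>UNIV. real (card G) * (if a = b then 1 else 0) / real CARD('n) * (if a = b then 1 else 0))"
    unfolding avg[OF odd G irr] by (simp add: trace_ad y trace_Emat mat_def)
  also have "\<dots> = real (card G)"
    by (simp add: if_distrib if_distribR sum.delta cong: if_cong)
  finally show ?thesis .
qed


lemma cancel_left:
  fixes A X Y :: "real^'n^'n"
  assumes "invertible A" "A ** X = A ** Y" shows "X = Y"
proof -
  have "X = iv A ** (A ** X)" by (simp add: matrix_mul_assoc iv_simps assms(1))
  also have "\<dots> = iv A ** (A ** Y)" by (simp only: assms(2))
  also have "\<dots> = Y" by (simp add: matrix_mul_assoc iv_simps assms(1))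
  finally show ?thesis .
qed

lemma cancel_right:
  fixes A X Y :: "real^'n^'n"
  assumes "invertible A" "X ** A = Y ** A" shows "X = Y"
proof -
  have "X = X ** A ** iv A" by (simp add: iv_simps assms(1))
  also have "\<dots> = Y ** A ** iv A" by (simp only: assms(2))
  also have "\<dots> = Y" by (simp add: iv_simps assms(1))
  finally show ?thesis .
qed

lemma fin_order_closed:
  fixes H :: "(real^'n^'n) set"
  assumes fin: "finite H" and cl: "\<And>a b. a \<in> H \<Longrightarrow> b \<in> H \<Longrightarrow> a ** b \<in> H"
    and z: "z \<in> H" "invertible z"
  shows "\<exists>N>0. mpow z N = mat 1"
proof -
  define f where "f k = mpow z (Suc k)" for k
  have fH: "f k \<in> H" for k
    by (induction k) (auto simp: f_def z cl)
  have "\<not> inj f"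
  proof
    assume "inj f"
    then have "finite (UNIV :: nat set)"
      using finite_subset[OF _ fin] fH by (metis finite_imageD image_subsetI)
    then show False by simp
  qed
  then obtain a b where ab: "a < b" "f a = f b"
    unfolding inj_def by (metis linorder_neq_iff)
  have "mpow z (Suc b) = mpow z (b - a) ** mpow z (Suc a)"
  proof -
    have "b - a + Suc a = Suc b" using ab(1) by simp
    then show ?thesis using mpow_add[of z "b - a" "Suc a"] by simp
  qed
  then have "mpow z (b - a) ** mpow z (Suc a) = mat 1 ** mpow z (Suc a)"
    using ab(2) by (simp add: f_def)
  then have "mpow z (b - a) = mat 1"
    by (rule cancel_right[OF mpow_invertible[OF z(2)]])
  then show ?thesis using ab(1) by (intro exI[of _ "b - a"]) simp
qed

lemma trace_sq_le:
  fixes G :: "(real^'n^'n) set"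
  assumes odd: "odd CARD('n)" and G: "finite_matrix_group G" and irr: "irreducible_module G"
    and y: "invertible y" and yG: "\<And>k. k \<in> G \<Longrightarrow> ad y k \<in> G"
    and ford: "\<And>h. h \<in> G \<Longrightarrow> \<exists>N>0. mpow (h ** y) N = mat 1"
  shows "(trace y)\<^sup>2 \<le> real (card (centralizer_aut G (ad y)))"
proof -
  note g = fmg[OF G]
  define C where "C = centralizer_aut G (ad y)"
  define f where "f k = k ** y ** iv k ** iv y" for k
  define T where "T = f ` G"
  have fG: "f k \<in> G" if "k \<in> G" for k
  proof -
    have "f k = k ** ad y (iv k)" by (simp add: f_def ad_def matrix_mul_assoc)
    then show ?thesis using that g yG by simp
  qed
  have TG: "T \<subseteq> G" using fG T_def by auto
  have finT: "finite T" using TG g finite_subset by blast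
  have finC: "finite C" using g unfolding C_def centralizer_aut_def by simp
  have Tne: "T \<noteq> {}" using g T_def by auto
  have trT: "trace (t ** y) = trace y" if tT: "t \<in> T" for t
  proof -
    obtain k where k: "k \<in> G" "t = f k" using tT unfolding T_def by blast
    have "t ** y = ad k y" using k g y by (simp add: f_def ad_def iv_simps)
    then show ?thesis using k g by (simp add: trace_ad)
  qed
  have sq: "trace (h ** y) * trace (iv (h ** y)) = (trace (h ** y))\<^sup>2" if hG: "h \<in> G" for h
  proof -
    obtain N where "N > 0" "mpow (h ** y) N = mat 1" using ford[OF hG] by blast
    then show ?thesis by (simp add: trace_iv_finite_order power2_eq_square)
  qed
  have "real (card T) * (trace y)\<^sup>2 = (\<Sum>t\<in>T. (trace (t ** y))\<^sup>2)"
    using trT by simp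
  also have "\<dots> \<le> (\<Sum>h\<in>G. (trace (h ** y))\<^sup>2)"
    by (rule sum_mono2[OF g(1) TG]) auto
  also have "\<dots> = real (card G)"
    using key_sum[OF odd G irr y] sq by simp
  finally have A: "real (card T) * (trace y)\<^sup>2 \<le> real (card G)" .
  define r where "r t = (SOME k. k \<in> G \<and> f k = t)" for t
  have r: "r (f k) \<in> G \<and> f (r (f k)) = f k" if "k \<in> G" for k
    unfolding r_def by (rule someI_ex) (use that in blast)
  define \<phi> where "\<phi> k = (f k, iv (r (f k)) ** k)" for k
  have "inj_on \<phi> G"
  proof
    fix k1 k2 assume k: "k1 \<in> G" "k2 \<in> G" "\<phi> k1 = \<phi> k2"
    then have "f k1 = f k2" "iv (r (f k1)) ** k1 = iv (r (f k1)) ** k2"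
      unfolding \<phi>_def by auto
    then show "k1 = k2"
      using cancel_left[of "iv (r (f k1))"] r[OF k(1)] g by (auto intro: invertible_iv)
  qed
  moreover have "\<phi> ` G \<subseteq> T \<times> C"
  proof
    fix x assume "x \<in> \<phi> ` G"
    then obtain k where k: "k \<in> G" "x = \<phi> k" by auto
    define k0 where "k0 = r (f k)"
    have k0: "k0 \<in> G" "f k0 = f k" using r[OF k(1)] k0_def by auto
    define c where "c = iv k0 ** k"
    have cG: "c \<in> G" using k k0 g c_def by auto
    have e1: "k0 ** y ** iv k0 = k ** y ** iv k"
      using cancel_right[of "iv y"] k0(2) y by (simp add: f_def invertible_iv)
    then have "k0 ** y ** iv k0 ** k = k ** y ** iv k ** k" by simp
    then have "k0 ** y ** c = k ** y" using k g k0 by (simp add: c_def iv_simps matrix_mul_assoc)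
    then have "iv k0 ** (k0 ** y ** c) = iv k0 ** (k ** y)" by simp
    then have "y ** c = c ** y" using k0 g by (simp add: c_def iv_simps matrix_mul_assoc)
    then have "ad y c = c" using y by (simp add: ad_def iv_simps)
    then have "c \<in> C" using cG by (simp add: C_def centralizer_aut_def)
    moreover have "f k \<in> T" using k T_def by auto
    ultimately show "x \<in> T \<times> C" using k by (simp add: \<phi>_def c_def k0_def)
  qed
  ultimately have "card G \<le> card (T \<times> C)"
    by (intro card_inj_on_le) (auto simp: finT finC)
  then have B: "real (card G) \<le> real (card T) * real (card C)"
    by (simp add: card_cartesian_product flip: of_nat_mult)
  have "real (card T) > 0" using finT Tne by (simp add: card_gt_0_iff)
  with A B have "real (card T) * (trace y)\<^sup>2 \<le> real (card T) * real (card C)" by linarith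
  then show ?thesis using \<open>real (card T) > 0\<close> unfolding C_def by simp
qed


lemma nt_dvd:
  fixes m i k :: nat
  assumes "0 < i" "i < m"
  shows "\<exists>s p. prime p \<and> (\<forall>k. m dvd (i * s) * k \<longleftrightarrow> p dvd k)"
proof -
  define d where "d = gcd m i"
  define qq where "qq = m div d"
  define i' where "i' = i div d"
  have d0: "d > 0" using assms by (simp add: d_def)
  have mo: "m = d * qq" by (simp add: qq_def d_def)
  have ii: "i = d * i'" by (simp add: i'_def d_def)
  have cop: "coprime qq i'" unfolding qq_def i'_def d_def
    using assms by (intro div_gcd_coprime) auto
  have "qq \<noteq> 1"
  proof
    assume "qq = 1"
    then have "m dvd i" using mo d_def by (metis mult.right_neutral gcd_dvd2)
    then show False using assms by (simp add: nat_dvd_not_less)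
  qed
  then obtain p where p: "prime p" "p dvd qq" using prime_factor_nat by blast
  define s where "s = qq div p"
  have os: "qq = s * p" using p by (simp add: s_def)
  have s0: "s > 0" using os mo assms by (cases s) auto
  have "m dvd (i * s) * k \<longleftrightarrow> p dvd k" for k
  proof -
    have "m dvd (i * s) * k \<longleftrightarrow> qq dvd i' * (s * k)"
      using d0 by (simp add: mo ii mult.assoc)
    also have "\<dots> \<longleftrightarrow> qq dvd s * k" using cop by (simp add: coprime_dvd_mult_right_iff)
    also have "\<dots> \<longleftrightarrow> p dvd k" using s0 by (simp add: os mult.commute)
    finally show ?thesis .
  qed
  then show ?thesis using p by blast
qed

lemma least_prime_dvd:
  assumes "prime (p::nat)"
  shows "(LEAST k. 0 < k \<and> p dvd k) = p"
  by (rule Least_equality) (use assms in \<open>auto simp: prime_gt_0_nat dvd_imp_le\<close>)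


lemma mpow_one: "mpow (mat 1 :: real^'n^'n) k = mat 1"
  by (induction k) simp_all

lemma mpow_mod:
  assumes "mpow (A::real^'n^'n) N = mat 1"
  shows "mpow A k = mpow A (k mod N)"
proof -
  have "mpow A k = mpow A (N * (k div N) + k mod N)" by simp
  also have "\<dots> = mpow A (k mod N)"
    unfolding mpow_add mpow_mult assms mpow_one by simp
  finally show ?thesis .
qed

lemma fix_funpow: "f z = z \<Longrightarrow> (f ^^ s) z = z"
  by (induction s) auto

theorem proposition3:
  fixes G :: "(real^'d^'d) set" and n g :: "real^'d^'d"
  assumes "odd CARD('d)"
    and "finite_matrix_group G"
    and "irreducible_module G"
    and "nontrivial_module G"
    and "- mat 1 \<notin> G"
    and "in_normalizer n G"
    and "\<exists>k>0. mpow n k = mat 1"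
    and "g \<in> G"
    and "even (aut_order G (ad g \<circ> ad n))"
    and "\<forall>j. prime (aut_order G ((ad g \<circ> ad n) ^^ j)) \<longrightarrow>
           real CARD('d) > real (aut_order G (ad g \<circ> ad n) - 1)
              * sqrt (real (card (centralizer_aut G ((ad g \<circ> ad n) ^^ j))))"
  shows "E1_property G n"
proof -
  note odd = assms(1) and Gg = assms(2) and irr = assms(3) and gG = assms(8)
  note gr = fmg[OF Gg]
  obtain N0 where N0: "N0 > 0" "mpow n N0 = mat 1" using assms(7) by blast
  have invn: "invertible n" using assms(6) unfolding in_normalizer_def by blast
  have adnG: "ad n ` G = G" using assms(6) unfolding in_normalizer_def by blast
  have invg: "invertible g" using gr gG by blast
  define x where "x = g ** n"
  have invx: "invertible x" unfolding x_def by (rule invertible_mul[OF invg invn])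
  have alpha: "ad g \<circ> ad n = ad x" unfolding x_def by (simp add: ad_mul invg invn)
  have pw: "(ad g \<circ> ad n) ^^ j = ad (mpow x j)" for j
    unfolding alpha by (rule ad_mpow[OF invx])
  have adg_in: "ad a k \<in> G" if "a \<in> G" "k \<in> G" for a k
    using that gr by (simp add: ad_def)
  have adn_in: "ad n k \<in> G" if "k \<in> G" for k using that adnG by blast
  have adnpow_in: "ad (mpow n a) k \<in> G" if "k \<in> G" for a k
  proof -
    have "(ad n ^^ a) k \<in> G" using that by (induction a) (auto intro: adn_in)
    then show ?thesis by (simp add: ad_mpow[OF invn])
  qed
  have adx_in: "ad x k \<in> G" if "k \<in> G" for k
    using that adg_in[OF gG] adn_in by (simp flip: alpha)
  have adxpow_in: "ad (mpow x a) k \<in> G" if "k \<in> G" for a k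
  proof -
    have "(ad x ^^ a) k \<in> G" using that by (induction a) (auto intro: adx_in)
    then show ?thesis by (simp add: ad_mpow[OF invx])
  qed
  define H where "H = (\<lambda>(h, k). h ** mpow n k) ` (G \<times> {..<N0})"
  have finH: "finite H" unfolding H_def using gr by simp
  have memH: "h ** mpow n k \<in> H" if "h \<in> G" for h k
  proof -
    have "mpow n k = mpow n (k mod N0)" by (rule mpow_mod[OF N0(2)])
    moreover have "k mod N0 < N0" using N0 by simp
    ultimately show ?thesis unfolding H_def using that by force
  qed
  have HE: "\<exists>h k. h \<in> G \<and> a = h ** mpow n k" if "a \<in> H" for a
    using that unfolding H_def by force
  have clH: "a ** b \<in> H" if ab: "a \<in> H" "b \<in> H" for a b
  proof -
    obtain h1 k1 where 1: "h1 \<in> G" "a = h1 ** mpow n k1" using HE ab by blast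
    obtain h2 k2 where 2: "h2 \<in> G" "b = h2 ** mpow n k2" using HE ab by blast
    have inv1: "invertible (mpow n k1)" by (rule mpow_invertible[OF invn])
    have "a ** b = (h1 ** ad (mpow n k1) h2) ** mpow n (k1 + k2)"
      using 1 2 inv1 by (simp add: ad_def mpow_add matrix_mul_assoc iv_simps)
    then show ?thesis using 1 2 gr adnpow_in memH by simp
  qed
  have invH: "invertible a" if "a \<in> H" for a
    using HE[OF that] gr mpow_invertible[OF invn] invertible_mul by blast
  have xH: "mpow x i \<in> H" for i
  proof (induction i)
    case 0
    show ?case using memH[OF gr(2), of 0] by simp
  next
    case (Suc i)
    have "x \<in> H" using memH[OF gG, of 1] by (simp add: x_def)
    then show ?case using clH Suc by simp
  qed
  have hxH: "h ** mpow x i \<in> H" if "h \<in> G" for h i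
    using clH[OF _ xH] memH[OF that, of 0] by simp
  have ford: "\<exists>N>0. mpow (h ** mpow x i) N = mat 1" if "h \<in> G" for h i
    using fin_order_closed[OF finH clH hxH[OF that] invH[OF hxH[OF that]]] by blast
  obtain Nx where Nx: "Nx > 0" "mpow x Nx = mat 1"
    using ford[OF gr(2), of 1] by auto
  define m where "m = aut_order G (ad g \<circ> ad n)"
  define Q where "Q k \<longleftrightarrow> 0 < k \<and> (\<forall>y\<in>G. ad (mpow x k) y = y)" for k
  have m_def': "m = (LEAST k. Q k)"
    unfolding m_def aut_order_def Q_def pw ..
  have QN: "Q Nx" using Nx by (simp add: Q_def ad_one)
  have Qm: "Q m" unfolding m_def' by (rule LeastI[of Q, OF QN])
  have notQ: "\<not> Q k" if "k < m" for k using that not_less_Least unfolding m_def' by blast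
  have m0: "m > 0" using Qm Q_def by simp
  have invxm: "invertible (mpow x m)" by (rule mpow_invertible[OF invx])
  have comm: "h ** mpow x m = mpow x m ** h" if "h \<in> G" for h
  proof -
    have "ad (mpow x m) h = h" using Qm that Q_def by blast
    then have "mpow x m ** h ** iv (mpow x m) ** mpow x m = h ** mpow x m"
      unfolding ad_def by simp
    then show ?thesis using invxm by (simp add: iv_simps)
  qed
  define c where "c = trace (mpow x m) / real CARD('d)"
  have xmc: "mpow x m = c *\<^sub>R mat 1"
    unfolding c_def by (rule schur[OF odd irr]) (use comm in auto)
  have "det (mpow x m) \<ge> 0"
    using assms(9) unfolding det_mpow m_def[symmetric] by (simp add: zero_le_even_power)
  then have "c ^ CARD('d) \<ge> 0" using xmc det_scaleR_mat1 by metis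
  then have c0: "c \<ge> 0" using odd by (simp add: zero_le_odd_power)
  have "mpow x (m * Nx) = mat 1" unfolding mult.commute[of m] mpow_mult Nx mpow_one ..
  moreover have "mpow x (m * Nx) = (c ^ Nx) *\<^sub>R mat 1"
    unfolding mpow_mult xmc mpow_scalar ..
  ultimately have "(c ^ Nx) *\<^sub>R (mat 1 :: real^'d^'d) = 1 *\<^sub>R mat 1" by simp
  then have "((c ^ Nx) *\<^sub>R (mat 1 :: real^'d^'d)) $ undefined $ undefined = ((1::real) *\<^sub>R (mat 1 :: real^'d^'d)) $ undefined $ undefined"
    by simp
  then have "c ^ Nx = 1" by (simp add: mat_def)
  then have c1: "c = 1"
  proof -
    assume cN: "c ^ Nx = 1"
    show "c = 1"
    proof (rule ccontr)
      assume "c \<noteq> 1"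
      then consider "c < 1" | "c > 1" by linarith
      then show False
      proof cases
        case 1 then have "c ^ Nx < 1" using c0 Nx(1) by (simp add: power_less_one_iff)
        then show False using cN by simp
      next
        case 2 then have "c ^ Nx > 1" using Nx(1) by (simp add: one_less_power)
        then show False using cN by simp
      qed
    qed
  qed
  have xm: "mpow x m = mat 1" using xmc c1 by simp
  have fixiff: "(\<forall>y\<in>G. ad (mpow x t) y = y) \<longleftrightarrow> m dvd t" for t
  proof
    assume fx: "\<forall>y\<in>G. ad (mpow x t) y = y"
    show "m dvd t"
    proof (rule ccontr)
      assume "\<not> m dvd t"
      then have "0 < t mod m" "t mod m < m" using m0 by (auto simp: mod_greater_zero_iff_not_dvd)
      moreover have "\<forall>y\<in>G. ad (mpow x (t mod m)) y = y" using fx mpow_mod[OF xm, of t] by simp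
      ultimately show False using notQ Q_def by blast
    qed
  next
    assume "m dvd t"
    then have "t mod m = 0" by simp
    then show "\<forall>y\<in>G. ad (mpow x t) y = y" using mpow_mod[OF xm, of t] by (simp add: ad_one)
  qed
  have trb: "trace (mpow x i) > - real CARD('d) / real (m - 1)" if i: "0 < i" "i < m" for i
  proof -
    define y where "y = mpow x i"
    have invy: "invertible y" unfolding y_def by (rule mpow_invertible[OF invx])
    have sq: "(trace y)\<^sup>2 \<le> real (card (centralizer_aut G (ad y)))"
      by (rule trace_sq_le[OF odd Gg irr invy]) (auto simp: y_def adxpow_in ford)
    obtain s p where sp: "prime p" "\<And>k. m dvd (i * s) * k \<longleftrightarrow> p dvd k"
      using nt_dvd[OF i] by blast
    define j where "j = i * s"
    have "aut_order G ((ad g \<circ> ad n) ^^ j) = (LEAST k. 0 < k \<and> p dvd k)"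
    proof -
      have e: "((ad g \<circ> ad n) ^^ j) ^^ k = ad (mpow x (j * k))" for k
        by (subst funpow_mult) (rule pw)
      show ?thesis unfolding aut_order_def e fixiff
        by (simp add: sp(2) j_def)
    qed
    then have pr: "prime (aut_order G ((ad g \<circ> ad n) ^^ j))"
      using least_prime_dvd[OF sp(1)] sp(1) by simp
    have sub: "centralizer_aut G (ad y) \<subseteq> centralizer_aut G (ad (mpow x j))"
    proof
      fix z assume "z \<in> centralizer_aut G (ad y)"
      then have z: "z \<in> G" "ad y z = z" unfolding centralizer_aut_def by auto
      have "(ad y ^^ s) z = z" by (rule fix_funpow[where f="ad y", OF z(2)])
      then have "ad (mpow x j) z = z"
        by (simp add: j_def mpow_mult y_def ad_mpow[OF invy[unfolded y_def]])
      then show "z \<in> centralizer_aut G (ad (mpow x j))" using z(1) unfolding centralizer_aut_def by auto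
    qed
    have finC: "finite (centralizer_aut G (ad (mpow x j)))"
      using gr unfolding centralizer_aut_def by simp
    have "real (card (centralizer_aut G (ad y))) \<le> real (card (centralizer_aut G (ad (mpow x j))))"
      using card_mono[OF finC sub] by simp
    then have abs: "\<bar>trace y\<bar> \<le> sqrt (real (card (centralizer_aut G (ad (mpow x j)))))"
      using sq by (metis real_sqrt_abs real_sqrt_le_mono order_trans)
    have hyp: "real CARD('d) > real (m - 1) * sqrt (real (card (centralizer_aut G (ad (mpow x j)))))"
      using assms(10) pr unfolding m_def pw by blast
    have m1: "m - 1 > 0"
    proof -
      have "m \<noteq> 1" using i by simp
      then show ?thesis using m0 by simp
    qed
    have "real (m - 1) * \<bar>trace y\<bar> < real CARD('d)"
      using hyp abs m1 by (smt (verit) mult_left_mono of_nat_0_less_iff)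
    then have "\<bar>trace y\<bar> < real CARD('d) / real (m - 1)"
      using m1 by (simp add: field_simps)
    then show ?thesis unfolding y_def by (simp add: abs_less_iff minus_divide_left[symmetric])
  qed
  define P where "P = (\<Sum>i<m. mpow x i)"
  obtain m' where m': "m = Suc m'" using m0 by (cases m) auto
  have m'0: "m' > 0"
  proof -
    have "odd (1::nat)" by simp
    then have "m \<noteq> 1" using assms(9) m_def by metis
    then show ?thesis using m' by simp
  qed
  have Pe: "P = mpow x 0 + (\<Sum>i<m'. mpow x (Suc i))"
    unfolding P_def m' by (rule sum.lessThan_Suc_shift)
  have "trace P = trace (mpow x 0) + (\<Sum>i<m'. trace (mpow x (Suc i)))"
    unfolding Pe by (simp only: trace_add trace_sum[OF finite_lessThan])
  moreover have "(\<Sum>i<m'. - real CARD('d) / real m') < (\<Sum>i<m'. trace (mpow x (Suc i)))"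
  proof (rule sum_strict_mono)
    show "finite {..<m'}" by simp
    show "{..<m'} \<noteq> {}" using m'0 by auto
    fix i assume "i \<in> {..<m'}"
    then have "0 < Suc i" "Suc i < m" using m' by auto
    from trb[OF this] show "- real CARD('d) / real m' < trace (mpow x (Suc i))"
      using m' by simp
  qed
  moreover have "(\<Sum>i<m'. - real CARD('d) / real m') = - real CARD('d)"
    using m'0 by simp
  ultimately have "trace P > 0" by (simp add: trace_I)
  then have "P \<noteq> 0" by (auto simp: trace_0[simplified])
  then obtain w where w: "P *v w \<noteq> 0"
    by (metis matrix_eq matrix_vector_mult_0)
  have xP: "x ** P = P"
  proof -
    have "x ** P = (\<Sum>i<m. mpow x (Suc i))" unfolding P_def by (simp add: sum_mmul_left)
    also have "\<dots> = P"
    proof -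
      have "(\<Sum>i<Suc m'. mpow x (Suc i)) = (\<Sum>i<m'. mpow x (Suc i)) + mpow x (Suc m')"
        by (rule sum.lessThan_Suc)
      moreover have "(\<Sum>i<Suc m'. mpow x i) = mpow x 0 + (\<Sum>i<m'. mpow x (Suc i))"
        by (rule sum.lessThan_Suc_shift)
      moreover have "mpow x (Suc m') = mpow x 0" using xm m' by simp
      ultimately show ?thesis unfolding P_def m' by (simp add: add.commute)
    qed
    finally show ?thesis .
  qed
  have "(g ** n) *v (P *v w) = P *v w"
    using xP by (simp add: x_def[symmetric] matrix_vector_mul_assoc)
  then show ?thesis unfolding E1_property_def using gG w by blast
qed
end
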